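(* Let $k\ge 1$ be an integer and let $\vec G=(V,\vec E)$ be a directed graph whose underlying undirected graph $G=(V,E)$ has an $f$-weighted $\beta$-orientation for every mapping $f:E\to\mathbb{Z}_{2k+1}\setminus\{0\}$ and every $\mathbb{Z}_{2k+1}$-boundary $\beta$. For every arc $\vec e\in\vec E$, let $L(\vec e)$ be a set of two distinct elements of $\mathbb{Z}_{2k+1}$. Then for every $\mathbb{Z}_{2k+1}$-boundary $\beta$, $\vec G$ has a $\mathbb{Z}_{2k+1}$-flow $g$ with boundary $\beta$ such that $g(\vec e)\in L(\vec e)$ for every $\vec e\in\vec E$.
   Context: Graphs are finite and may have multiple edges but no loops. A $\mathbb{Z}_m$-boundary is a map $\beta:V\to\mathbb{Z}_m$ with $\sum_{v\in V}\beta(v)\equiv0\pmod m$. For an orientation (or directed graph) $\vec G$ and $v\in V$, $\delta^+_{\vec G}(v)$ (resp. $\delta^-_{\vec G}(v)$) is the set of arcs leaving (resp. entering) $v$, and for a weight map $h$ on edges/arcs, $\partial h(v)=\sum_{\vec e\in\delta^+_{\vec G}(v)}h(e)-\sum_{\vec e\in\delta^-_{\vec G}(v)}h(e)$. Given $f:E\to\mathbb{Z}_m$, an orientation of $G$ is an $f$-weighted $\beta$-orientation if $\partial f(v)\equiv\beta(v)\pmod m$ for all $v$. A $\mathbb{Z}_m$-flow with boundary $\beta$ in $\vec G$ is a map $g:\vec E\to\mathbb{Z}_m$ with $\partial g(v)\equiv\beta(v)\pmod m$ for all $v$. *)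

theory Defs
  imports "HOL-Number_Theory.Cong"
begin

text \<open>Its underlying undirected graph has the same edge set E.\<close>

definition multidigraph :: "'v set \<Rightarrow> 'e set \<Rightarrow> ('e \<Rightarrow> 'v) \<Rightarrow> ('e \<Rightarrow> 'v) \<Rightarrow> bool" where
  "multidigraph V E tail head \<longleftrightarrow> finite V \<and> finite E \<and>
     (\<forall>e\<in>E. tail e \<in> V \<and> head e \<in> V \<and> tail e \<noteq> head e)"

definition zm :: "int \<Rightarrow> int set" where
  "zm m = {0..<m}"

definition is_boundary :: "int \<Rightarrow> 'v set \<Rightarrow> ('v \<Rightarrow> int) \<Rightarrow> bool" where
  "is_boundary m V \<beta> \<longleftrightarrow> (\<forall>v\<in>V. \<beta> v \<in> zm m) \<and> [(\<Sum>v\<in>V. \<beta> v) = 0] (mod m)"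

definition bd :: "'e set \<Rightarrow> ('e \<Rightarrow> 'v) \<Rightarrow> ('e \<Rightarrow> 'v) \<Rightarrow> ('e \<Rightarrow> int) \<Rightarrow> 'v \<Rightarrow> int" where
  "bd E tail head h v = (\<Sum>e\<in>{e\<in>E. tail e = v}. h e) - (\<Sum>e\<in>{e\<in>E. head e = v}. h e)"

text \<open>An orientation of the underlying undirected graph is given by ori :: 'e => bool:
  ori e = True keeps the direction tail e -> head e, ori e = False reverses it.\<close>
definition weighted_orientation ::
  "int \<Rightarrow> 'v set \<Rightarrow> 'e set \<Rightarrow> ('e \<Rightarrow> 'v) \<Rightarrow> ('e \<Rightarrow> 'v) \<Rightarrow> ('e \<Rightarrow> int) \<Rightarrow> ('v \<Rightarrow> int) \<Rightarrow> ('e \<Rightarrow> bool) \<Rightarrow> bool" where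
  "weighted_orientation m V E tail head f \<beta> ori \<longleftrightarrow>
     (\<forall>v\<in>V. [bd E (\<lambda>e. if ori e then tail e else head e) (\<lambda>e. if ori e then head e else tail e) f v = \<beta> v] (mod m))"

definition is_flow :: "int \<Rightarrow> 'v set \<Rightarrow> 'e set \<Rightarrow> ('e \<Rightarrow> 'v) \<Rightarrow> ('e \<Rightarrow> 'v) \<Rightarrow> ('v \<Rightarrow> int) \<Rightarrow> ('e \<Rightarrow> int) \<Rightarrow> bool" where
  "is_flow m V E tail head \<beta> g \<longleftrightarrow> (\<forall>e\<in>E. g e \<in> zm m) \<and> (\<forall>v\<in>V. [bd E tail head g v = \<beta> v] (mod m))"

end

theory Submission
  imports Defs
begin

lemma bd_alt:
  assumes "finite E"
  shows "bd E t hh w v = (\<Sum>e\<in>E. (if t e = v then w e else 0) - (if hh e = v then w e else 0))"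
  unfolding bd_def using assms by (simp add: sum.inter_filter sum_subtractf)

lemma bd_add: "bd E t hh (\<lambda>e. x e + y e) v = bd E t hh x v + bd E t hh y v"
  unfolding bd_def by (simp add: sum.distrib)

lemma bd_cong:
  assumes "finite E" "\<forall>e\<in>E. h1 e mod m = h2 e mod (m::int)"
  shows "bd E t hh h1 v mod m = bd E t hh h2 v mod m"
proof -
  have "bd E t hh h1 v mod m = (\<Sum>e\<in>E. ((if t e = v then h1 e else 0) - (if hh e = v then h1 e else 0)) mod m) mod m"
    using assms(1) by (simp add: bd_alt mod_sum_eq)
  also have "\<dots> = (\<Sum>e\<in>E. ((if t e = v then h2 e else 0) - (if hh e = v then h2 e else 0)) mod m) mod m"
  proof (rule arg_cong[where f="\<lambda>x. x mod m"], rule sum.cong)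
    fix e assume "e \<in> E"
    then have "h1 e mod m = h2 e mod m" using assms(2) by auto
    then show "((if t e = v then h1 e else 0) - (if hh e = v then h1 e else 0)) mod m
      = ((if t e = v then h2 e else 0) - (if hh e = v then h2 e else 0)) mod m"
    proof -
      have c: "[h1 e = h2 e] (mod m)" using \<open>h1 e mod m = h2 e mod m\<close> by (simp add: cong_def)
      have "[(if t e = v then h1 e else 0) - (if hh e = v then h1 e else 0)
           = (if t e = v then h2 e else 0) - (if hh e = v then h2 e else 0)] (mod m)"
        by (intro cong_diff) (simp_all add: c)
      then show ?thesis by (simp add: cong_def)
    qed
  qed simp
  also have "\<dots> = bd E t hh h2 v mod m"
    using assms(1) by (simp add: bd_alt mod_sum_eq)
  finally show ?thesis .
qed

lemma bd_sum_zero: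
  assumes "finite V" "finite E" "\<forall>e\<in>E. t e \<in> V \<and> hh e \<in> V"
  shows "(\<Sum>v\<in>V. bd E t hh h v) = 0"
proof -
  have 1: "(\<Sum>v\<in>V. sum h {e. e \<in> E \<and> t e = v}) = sum h E"
    by (rule sum.group) (use assms in auto)
  have 2: "(\<Sum>v\<in>V. sum h {e. e \<in> E \<and> hh e = v}) = sum h E"
    by (rule sum.group) (use assms in auto)
  show ?thesis unfolding bd_def sum_subtractf using 1 2 by simp
qed

lemma bd_ori:
  assumes "finite E"
  shows "bd E (\<lambda>e. if ori e then t e else hh e) (\<lambda>e. if ori e then hh e else t e) f v
       = bd E t hh (\<lambda>e. (if ori e then 1 else -1) * f e) v"
  apply (simp only: bd_alt[OF assms])
  apply (rule sum.cong)
   apply auto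
  done


theorem lemma9:
  fixes k :: int and V :: "'v set" and E :: "'e set" and tail head :: "'e \<Rightarrow> 'v"
    and L :: "'e \<Rightarrow> int set"
  assumes "k \<ge> 1"
    and "multidigraph V E tail head"
    and "\<forall>f \<beta>. (\<forall>e\<in>E. f e \<in> zm (2*k+1) - {0}) \<and> is_boundary (2*k+1) V \<beta> \<longrightarrow>
           (\<exists>ori. weighted_orientation (2*k+1) V E tail head f \<beta> ori)"
    and "\<forall>e\<in>E. L e \<subseteq> zm (2*k+1) \<and> card (L e) = 2"
  shows "\<forall>\<beta>. is_boundary (2*k+1) V \<beta> \<longrightarrow>
           (\<exists>g. is_flow (2*k+1) V E tail head \<beta> g \<and> (\<forall>e\<in>E. g e \<in> L e))"
proof (intro allI impI)
  fix \<beta> assume bnd: "is_boundary (2*k+1) V \<beta>"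
  define m where "m = 2*k+1"
  have mpos: "m > 0" using assms(1) m_def by simp
  have fin: "finite V" "finite E" and ends: "\<forall>e\<in>E. tail e \<in> V \<and> head e \<in> V"
    using assms(2) unfolding multidigraph_def by auto
  have "\<forall>e\<in>E. \<exists>p. L e = {fst p, snd p} \<and> fst p \<noteq> snd p"
    using assms(4) by (force simp: card_2_iff)
  then obtain p where p: "\<forall>e\<in>E. L e = {fst (p e), snd (p e)} \<and> fst (p e) \<noteq> snd (p e)"
    by metis
  define a where "a e = fst (p e)" for e
  define b where "b e = snd (p e)" for e
  have ab: "\<forall>e\<in>E. L e = {a e, b e} \<and> a e \<noteq> b e" using p a_def b_def by auto
  have abz: "\<forall>e\<in>E. 0 \<le> a e \<and> a e < m \<and> 0 \<le> b e \<and> b e < m"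
    using assms(4) ab unfolding zm_def m_def by auto
  define c where "c e = (a e + b e) * (k+1)" for e
  define d where "d e = (a e - b e) * (k+1)" for e
  define f where "f e = d e mod m" for e
  define \<beta>' where "\<beta>' v = (\<beta> v - bd E tail head c v) mod m" for v
  have fnz: "\<forall>e\<in>E. f e \<in> zm m - {0}"
  proof
    fix e assume e: "e \<in> E"
    have "f e \<noteq> 0"
    proof
      assume "f e = 0"
      then have "m dvd (a e - b e) * (k+1)" unfolding f_def d_def by auto
      then have "m dvd (a e - b e) * (k+1) * 2" by simp
      moreover have "(a e - b e) * (k+1) * 2 = (a e - b e) + (a e - b e) * m"
        unfolding m_def by (simp add: algebra_simps)
      ultimately have "m dvd (a e - b e)"
        by (metis dvd_add_times_triv_right_iff)
      moreover have "\<bar>a e - b e\<bar> < m" "a e - b e \<noteq> 0" using abz ab e by auto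
      ultimately show False using dvd_imp_le_int[of "a e - b e" m] mpos by auto
    qed
    then show "f e \<in> zm m - {0}" unfolding f_def zm_def using mpos by auto
  qed
  have bnd': "is_boundary m V \<beta>'"
    unfolding is_boundary_def
  proof
    show "\<forall>v\<in>V. \<beta>' v \<in> zm m" unfolding \<beta>'_def zm_def using mpos by auto
    have "(\<Sum>v\<in>V. \<beta>' v) mod m = (\<Sum>v\<in>V. \<beta> v - bd E tail head c v) mod m"
      unfolding \<beta>'_def by (simp add: mod_sum_eq)
    also have "\<dots> = (\<Sum>v\<in>V. \<beta> v) mod m"
      using bd_sum_zero[OF fin ends] by (simp add: sum_subtractf)
    also have "\<dots> = 0 mod m" using bnd unfolding is_boundary_def m_def cong_def by simp
    finally show "[(\<Sum>v\<in>V. \<beta>' v) = 0] (mod m)" by (simp add: cong_def)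
  qed
  obtain ori where ori: "weighted_orientation m V E tail head f \<beta>' ori"
    using assms(3) fnz bnd' unfolding m_def by blast
  define s where "s e = (if ori e then 1 else -1::int)" for e
  define g where "g e = (c e + s e * d e) mod m" for e
  have ca: "(c e + d e) mod m = a e mod m" for e
  proof -
    have "c e + d e = a e + a e * m" unfolding c_def d_def m_def by (simp add: algebra_simps)
    then show ?thesis by simp
  qed
  have cb: "(c e - d e) mod m = b e mod m" for e
  proof -
    have "c e - d e = b e + b e * m" unfolding c_def d_def m_def by (simp add: algebra_simps)
    then show ?thesis by simp
  qed
  have gL: "\<forall>e\<in>E. g e \<in> L e"
  proof
    fix e assume e: "e \<in> E"
    show "g e \<in> L e"
    proof (cases "ori e")
      case True
      then have "g e = a e mod m" unfolding g_def s_def using ca by simp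
      also have "\<dots> = a e" using abz e by simp
      finally show ?thesis using ab e by simp
    next
      case False
      then have "g e = b e mod m" unfolding g_def s_def using cb by simp
      also have "\<dots> = b e" using abz e by simp
      finally show ?thesis using ab e by simp
    qed
  qed
  have flow: "is_flow m V E tail head \<beta> g"
    unfolding is_flow_def
  proof
    show "\<forall>e\<in>E. g e \<in> zm m" unfolding g_def zm_def using mpos by auto
    show "\<forall>v\<in>V. [bd E tail head g v = \<beta> v] (mod m)"
    proof
      fix v assume v: "v \<in> V"
      have "bd E tail head g v mod m = bd E tail head (\<lambda>e. c e + s e * f e) v mod m"
      proof (rule bd_cong[OF fin(2)], intro ballI)
        fix e
        have "(c e + s e * (d e mod m)) mod m = (c e + (s e * (d e mod m)) mod m) mod m"
          by (rule mod_add_right_eq[symmetric])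
        also have "(s e * (d e mod m)) mod m = (s e * d e) mod m" by (rule mod_mult_right_eq)
        also have "(c e + (s e * d e) mod m) mod m = (c e + s e * d e) mod m" by (rule mod_add_right_eq)
        finally show "g e mod m = (c e + s e * f e) mod m" unfolding g_def f_def by simp
      qed
      also have "\<dots> = (bd E tail head c v + bd E tail head (\<lambda>e. s e * f e) v) mod m"
        by (simp add: bd_add)
      also have "bd E tail head (\<lambda>e. s e * f e) v = bd E (\<lambda>e. if ori e then tail e else head e) (\<lambda>e. if ori e then head e else tail e) f v"
        using bd_ori[OF fin(2), of ori tail head f v] unfolding s_def by simp
      also have "(bd E tail head c v + \<dots>) mod m = (bd E tail head c v + \<beta>' v) mod m"
      proof -
        let ?y = "bd E (\<lambda>e. if ori e then tail e else head e) (\<lambda>e. if ori e then head e else tail e) f v"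
        have y: "?y mod m = \<beta>' v mod m" using ori v unfolding weighted_orientation_def cong_def by blast
        have "(bd E tail head c v + ?y) mod m = (bd E tail head c v + ?y mod m) mod m"
          by (rule mod_add_right_eq[symmetric])
        also have "\<dots> = (bd E tail head c v + \<beta>' v) mod m" unfolding y by (rule mod_add_right_eq)
        finally show ?thesis .
      qed
      also have "\<dots> = \<beta> v mod m" unfolding \<beta>'_def by (simp add: mod_add_right_eq)
      finally show "[bd E tail head g v = \<beta> v] (mod m)" by (simp add: cong_def)
    qed
  qed
  show "\<exists>g. is_flow (2*k+1) V E tail head \<beta> g \<and> (\<forall>e\<in>E. g e \<in> L e)"
    using flow gL unfolding m_def by blast
qed

end
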